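(* Let $D$ be a bounded domain in $\mathbb{R}^m$, $m \geq 2$, and let $u \in C^0(D)$. For $x \in D$ and $0 < r_1 < r_2$ put $A_x(r_1,r_2) = \{ y \in \mathbb{R}^m : r_1 < |x-y| < r_2 \}$, and call $B_{r_2}(x) = \{y : |y-x|<r_2\}$ admissible if $\overline{B_{r_2}(x)} \subset D$. Suppose that $$\frac{1}{|A_x(r_1,r_2)|}\int_{A_x(r_1,r_2)} u(y)\,\mathrm{d}y \;=\; \frac{1}{\omega_m r^{m-1}} \int_{S_r(x)} u(y)\,\mathrm{d}S_y$$ holds for every $x \in D$ and every $r_2 > r_1 > 0$ such that $B_{r_2}(x)$ is admissible, where $S_r(x)=\{y : |y-x| = r\}$ and $r$ is subject to one of the following: either the identity holds for every $r \in (r_1,r_2)$, or it holds with $r = r_1$, or it holds with $r = r_2$. Then $u$ is harmonic in $D$.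
   Context: $|A|$ denotes Lebesgue measure (volume) of $A$, $\mathrm{d}S$ is the surface area measure, and $\omega_m = 2\pi^{m/2}/\Gamma(m/2)$ is the area of the unit sphere in $\mathbb{R}^m$, so the right-hand side is the mean value of $u$ over the sphere $S_r(x)$. *)

theory Defs
  imports "HOL-Analysis.Analysis"
begin

definition omega :: "nat \<Rightarrow> real" where
  "omega m = 2 * pi powr (real m / 2) / Gamma (real m / 2)"

definition annulus :: "'a::euclidean_space \<Rightarrow> real \<Rightarrow> real \<Rightarrow> 'a set" where
  "annulus x r1 r2 = {y. r1 < dist x y \<and> dist x y < r2}"

text \<open>HOL-Analysis has no surface measure, so we use the cone
  construction, which for spheres gives exactly the surface measure:
  sigma(E) = (m/r) |{x + t (y - x) : y in E, 0 < t <= 1}|, i.e.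
  integral over S_r(x) of f dS = (m/r) * integral over B_r(x) of f(x + r (y-x)/|y-x|) dy.\<close>
definition sphere_integral :: "('a::euclidean_space \<Rightarrow> real) \<Rightarrow> 'a \<Rightarrow> real \<Rightarrow> real" where
  "sphere_integral f x r =
     (real DIM('a) / r) * integral (ball x r) (\<lambda>y. f (x + (r / norm (y - x)) *\<^sub>R (y - x)))"

definition harmonic_on :: "'a::euclidean_space set \<Rightarrow> ('a \<Rightarrow> real) \<Rightarrow> bool" where
  "harmonic_on D u \<longleftrightarrow>
     (\<exists>u' u''. (\<forall>x\<in>D. (u has_derivative u' x) (at x)) \<and>
               (\<forall>x\<in>D. \<forall>v. ((\<lambda>y. u' y v) has_derivative u'' x v) (at x)) \<and>
               (\<forall>v w. continuous_on D (\<lambda>x. u'' x v w)) \<and>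
               (\<forall>x\<in>D. (\<Sum>b\<in>Basis. u'' x b b) = 0))"

end

theory Submission
  imports Defs
begin

lemma deriv_maxpow:
  fixes t :: real
  assumes "k \<ge> 2"
  shows "((\<lambda>t. max 0 t ^ k) has_real_derivative (real k * max 0 t ^ (k - 1))) (at t)"
proof -
  consider "t > 0" | "t < 0" | "t = 0" by linarith
  then show ?thesis
  proof cases
    case 1
    have "((\<lambda>t. t ^ k) has_real_derivative (real k * max 0 t ^ (k - 1))) (at t)"
      using 1 by (intro derivative_eq_intros) auto
    then show ?thesis
      apply (rule has_field_derivative_transform_within_open[where S="{0<..}"])
      using 1 by auto
  next
    case 2
    have "((\<lambda>t. 0) has_real_derivative 0) (at t)" by simp
    then have "((\<lambda>t. max 0 t ^ k) has_real_derivative 0) (at t)"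
      apply (rule has_field_derivative_transform_within_open[where S="{..<0}"])
      using 2 assms by auto
    moreover have "real k * max 0 t ^ (k - 1) = 0" using 2 assms by (simp add: zero_power)
    ultimately show ?thesis by metis
  next
    case 3
    have "((\<lambda>h::real. (max 0 (0 + h) ^ k - max 0 0 ^ k) / h) \<longlongrightarrow> 0) (at 0)"
    proof (rule Lim_null_comparison[where g="\<lambda>h. \<bar>h\<bar> ^ (k - 1)"])
      show "\<forall>\<^sub>F h in at 0. norm ((max 0 (0 + h) ^ k - max 0 0 ^ k) / h) \<le> \<bar>h\<bar> ^ (k - 1)"
      proof (rule always_eventually, rule allI)
        fix h :: real
        show "norm ((max 0 (0 + h) ^ k - max 0 0 ^ k) / h) \<le> \<bar>h\<bar> ^ (k - 1)"
        proof (cases "h > 0")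
          case True
          obtain j where j: "k = Suc (Suc j)" using assms by (metis add_2_eq_Suc le_Suc_ex)
          show ?thesis using True j by simp
        next
          case False
          then show ?thesis using assms by auto
        qed
      qed
      show "((\<lambda>h. \<bar>h\<bar> ^ (k - 1)) \<longlongrightarrow> 0) (at (0::real))"
        using assms by (auto intro!: tendsto_eq_intros)
    qed
    note L = this
    have e: "real k * max 0 t ^ (k - 1) = 0" using 3 assms by (simp add: zero_power)
    show ?thesis unfolding e DERIV_def using L 3 by simp
  qed
qed

definition kap :: "real \<Rightarrow> real \<Rightarrow> real" where "kap r s = max 0 (r^2 - s) ^ 3"
definition kap1 :: "real \<Rightarrow> real \<Rightarrow> real" where "kap1 r s = - (3 * max 0 (r^2 - s) ^ 2)"
definition kap2 :: "real \<Rightarrow> real \<Rightarrow> real" where "kap2 r s = 6 * max 0 (r^2 - s)"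

lemma kap_deriv: "(kap r has_real_derivative kap1 r s) (at s)"
proof -
  have "((\<lambda>s. max 0 (r^2 - s) ^ 3) has_real_derivative (real 3 * max 0 (r^2 - s) ^ (3 - 1)) * (-1)) (at s)"
    by (rule DERIV_chain2[OF deriv_maxpow]) (auto intro!: derivative_eq_intros)
  then show ?thesis unfolding kap_def[abs_def] kap1_def by simp
qed

lemma kap1_deriv: "(kap1 r has_real_derivative kap2 r s) (at s)"
proof -
  have "((\<lambda>s. max 0 (r^2 - s) ^ 2) has_real_derivative (real 2 * max 0 (r^2 - s) ^ (2 - 1)) * (-1)) (at s)"
    by (rule DERIV_chain2[OF deriv_maxpow]) (auto intro!: derivative_eq_intros)
  note d2 = this
  have "((\<lambda>s. - (3 * max 0 (r^2 - s) ^ 2)) has_real_derivative - (3 * ((real 2 * max 0 (r^2 - s) ^ (2 - 1)) * (-1)))) (at s)"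
    by (rule DERIV_minus[OF DERIV_cmult[OF d2]])
  then show ?thesis unfolding kap2_def kap1_def[abs_def] by simp
qed

lemma cont_kap [continuous_intros]: "continuous_on S (\<lambda>x. kap r (f x))" if "continuous_on S f"
  unfolding kap_def by (intro continuous_intros that)
lemma cont_kap1 [continuous_intros]: "continuous_on S (\<lambda>x. kap1 r (f x))" if "continuous_on S f"
  unfolding kap1_def by (intro continuous_intros that)
lemma cont_kap2 [continuous_intros]: "continuous_on S (\<lambda>x. kap2 r (f x))" if "continuous_on S f"
  unfolding kap2_def by (intro continuous_intros that)

definition Phi :: "('a::euclidean_space \<Rightarrow> real) \<Rightarrow> 'a \<Rightarrow> 'a \<Rightarrow> real \<Rightarrow> 'a \<Rightarrow> real" where
  "Phi w a b r x = integral (cbox a b) (\<lambda>y. w y * kap r ((y - x) \<bullet> (y - x)))"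
definition Phi1 :: "('a::euclidean_space \<Rightarrow> real) \<Rightarrow> 'a \<Rightarrow> 'a \<Rightarrow> real \<Rightarrow> 'a \<Rightarrow> 'a \<Rightarrow> real" where
  "Phi1 w a b r x h = integral (cbox a b) (\<lambda>y. w y * (-2 * kap1 r ((y - x) \<bullet> (y - x)) * ((y - x) \<bullet> h)))"
definition Phi2 :: "('a::euclidean_space \<Rightarrow> real) \<Rightarrow> 'a \<Rightarrow> 'a \<Rightarrow> real \<Rightarrow> 'a \<Rightarrow> 'a \<Rightarrow> 'a \<Rightarrow> real" where
  "Phi2 w a b r x h l = integral (cbox a b) (\<lambda>y. w y * (4 * kap2 r ((y - x) \<bullet> (y - x)) * ((y - x) \<bullet> h) * ((y - x) \<bullet> l)
      + 2 * kap1 r ((y - x) \<bullet> (y - x)) * (h \<bullet> l)))"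

lemma sqd_deriv: "((\<lambda>x. (t - x) \<bullet> (t - x)) has_derivative (\<lambda>h. -2 * ((t - x) \<bullet> h))) (at x within S)"
  by (rule has_derivative_eq_rhs[OF has_derivative_inner[OF has_derivative_diff[OF has_derivative_const has_derivative_ident]
     has_derivative_diff[OF has_derivative_const has_derivative_ident]]])
     (auto simp: fun_eq_iff algebra_simps inner_commute)

lemma Phi_deriv:
  fixes w :: "'a::euclidean_space \<Rightarrow> real"
  assumes w: "continuous_on (cbox a b) w"
  shows "(Phi w a b r has_derivative Phi1 w a b r x) (at x)"
proof -
  define fx where "fx = (\<lambda>x y. (w y * (-2 * kap1 r ((y - x) \<bullet> (y - x)))) *\<^sub>R blinfun_inner_left (y - x))"
  have cw: "continuous_on (UNIV \<times> cbox a b) (\<lambda>p. w (snd p))"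
    by (rule continuous_on_compose2[OF w continuous_on_snd]) auto
  have cfx: "continuous_on (UNIV \<times> cbox a b) (\<lambda>(x, t). fx x t)"
    unfolding fx_def split_beta
    by (intro continuous_intros cw)
  have "((\<lambda>x. integral (cbox a b) (\<lambda>y. w y * kap r ((y - x) \<bullet> (y - x)))) has_derivative integral (cbox a b) (fx x)) (at x within UNIV)"
  proof (rule leibniz_rule[where U=UNIV and fx=fx])
    fix x t assume "t \<in> cbox a b"
    show "((\<lambda>x. w t * kap r ((t - x) \<bullet> (t - x))) has_derivative blinfun_apply (fx x t)) (at x within UNIV)"
      unfolding fx_def
      by (rule has_derivative_eq_rhs[OF has_derivative_mult_right[OF DERIV_compose_FDERIV[OF kap_deriv sqd_deriv]]])
         (auto simp: fun_eq_iff algebra_simps inner_commute scaleR_blinfun.rep_eq uminus_blinfun.rep_eq)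
  next
    fix x show "(\<lambda>y. w y * kap r ((y - x) \<bullet> (y - x))) integrable_on cbox a b"
      by (intro integrable_continuous continuous_intros w)
  qed (use cfx in auto)
  moreover have "blinfun_apply (integral (cbox a b) (fx x)) = Phi1 w a b r x"
  proof
    fix h
    have "fx x integrable_on cbox a b"
      unfolding fx_def by (intro integrable_continuous continuous_intros w)
    then have "blinfun_apply (integral (cbox a b) (fx x)) h = integral (cbox a b) (\<lambda>y. blinfun_apply (fx x y) h)"
      by (rule blinfun_apply_integral)
    also have "\<dots> = Phi1 w a b r x h"
      unfolding Phi1_def fx_def by (rule integral_cong) (simp add: scaleR_blinfun.rep_eq uminus_blinfun.rep_eq inner_commute)
    finally show "blinfun_apply (integral (cbox a b) (fx x)) h = Phi1 w a b r x h" .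
  qed
  ultimately show ?thesis unfolding Phi_def[abs_def] by simp
qed


lemma lin_deriv: "((\<lambda>x. (t - x) \<bullet> h) has_derivative (\<lambda>l. - (l \<bullet> h))) (at x within S)"
  by (rule has_derivative_eq_rhs, (rule derivative_eq_intros)+) auto

lemma Phi1_deriv:
  fixes w :: "'a::euclidean_space \<Rightarrow> real"
  assumes w: "continuous_on (cbox a b) w"
  shows "((\<lambda>x. Phi1 w a b r x h) has_derivative Phi2 w a b r x h) (at x)"
proof -
  define fx where "fx = (\<lambda>x y. (w y * 4 * kap2 r ((y - x) \<bullet> (y - x)) * ((y - x) \<bullet> h)) *\<^sub>R blinfun_inner_left (y - x)
     + (w y * 2 * kap1 r ((y - x) \<bullet> (y - x))) *\<^sub>R blinfun_inner_left h)"
  have cw: "continuous_on (UNIV \<times> cbox a b) (\<lambda>p. w (snd p))"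
    by (rule continuous_on_compose2[OF w continuous_on_snd]) auto
  have cfx: "continuous_on (UNIV \<times> cbox a b) (\<lambda>(x, t). fx x t)"
    unfolding fx_def split_beta
    by (intro continuous_intros cw)
  have "((\<lambda>x. integral (cbox a b) (\<lambda>y. w y * (-2 * kap1 r ((y - x) \<bullet> (y - x)) * ((y - x) \<bullet> h)))) has_derivative integral (cbox a b) (fx x)) (at x within UNIV)"
  proof (rule leibniz_rule[where U=UNIV and fx=fx])
    fix x t assume "t \<in> cbox a b"
    show "((\<lambda>x. w t * (-2 * kap1 r ((t - x) \<bullet> (t - x)) * ((t - x) \<bullet> h))) has_derivative blinfun_apply (fx x t)) (at x within UNIV)"
      unfolding fx_def
      by (rule has_derivative_eq_rhs[OF has_derivative_mult_right[OF has_derivative_mult[OF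
            has_derivative_mult_right[OF DERIV_compose_FDERIV[OF kap1_deriv sqd_deriv]] lin_deriv]]])
         (auto simp: fun_eq_iff algebra_simps inner_commute scaleR_blinfun.rep_eq uminus_blinfun.rep_eq plus_blinfun.rep_eq minus_blinfun.rep_eq)
  next
    fix x show "(\<lambda>y. w y * (-2 * kap1 r ((y - x) \<bullet> (y - x)) * ((y - x) \<bullet> h))) integrable_on cbox a b"
      by (intro integrable_continuous continuous_intros w)
  qed (use cfx in auto)
  moreover have "blinfun_apply (integral (cbox a b) (fx x)) = Phi2 w a b r x h"
  proof
    fix l
    have "fx x integrable_on cbox a b"
      unfolding fx_def by (intro integrable_continuous continuous_intros w)
    then have "blinfun_apply (integral (cbox a b) (fx x)) l = integral (cbox a b) (\<lambda>y. blinfun_apply (fx x y) l)"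
      by (rule blinfun_apply_integral)
    also have "\<dots> = Phi2 w a b r x h l"
      unfolding Phi2_def fx_def by (rule integral_cong) (simp add: scaleR_blinfun.rep_eq uminus_blinfun.rep_eq plus_blinfun.rep_eq minus_blinfun.rep_eq inner_commute algebra_simps)
    finally show "blinfun_apply (integral (cbox a b) (fx x)) l = Phi2 w a b r x h l" .
  qed
  ultimately show ?thesis unfolding Phi1_def[abs_def] by simp
qed

lemma Phi2_cont:
  fixes w :: "'a::euclidean_space \<Rightarrow> real"
  assumes w: "continuous_on (cbox a b) w"
  shows "continuous_on UNIV (\<lambda>x. Phi2 w a b r x h l)"
proof -
  have cw: "continuous_on (UNIV \<times> cbox a b) (\<lambda>p. w (snd p))"
    by (rule continuous_on_compose2[OF w continuous_on_snd]) auto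
  show ?thesis unfolding Phi2_def
    by (rule integral_continuous_on_param) (simp add: split_beta, intro continuous_intros cw)
qed


lemma int_sub:
  fixes f :: "'a::euclidean_space \<Rightarrow> real"
  assumes "compact S" "continuous_on S f" "B \<in> sets lebesgue" "B \<subseteq> S"
  shows "f integrable_on B"
proof -
  have "set_integrable lborel S f" unfolding set_integrable_def
    using borel_integrable_compact[OF assms(1,2)] .
  then have "f integrable_on S" by (rule set_borel_integral_eq_integral(1))
  moreover have "set_integrable lborel S (\<lambda>x. norm (f x))" unfolding set_integrable_def
    using borel_integrable_compact[OF assms(1) continuous_on_norm[OF assms(2)]] .
  then have "(\<lambda>x. norm (f x)) integrable_on S" by (rule set_borel_integral_eq_integral(1))
  ultimately have "f absolutely_integrable_on S" by (simp add: absolutely_integrable_on_def)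
  then have "f absolutely_integrable_on B" by (rule set_integrable_subset) (use assms in auto)
  then show ?thesis by (rule set_lebesgue_integral_eq_integral(1))
qed

lemma int_bound:
  fixes f :: "'a::euclidean_space \<Rightarrow> real"
  assumes "S \<in> lmeasurable" "f integrable_on S" "\<And>x. x \<in> S \<Longrightarrow> \<bar>f x\<bar> \<le> B"
  shows "\<bar>integral S f\<bar> \<le> B * measure lebesgue S"
proof -
  have "norm (integral S f) \<le> integral S (\<lambda>x. B)"
    by (rule integral_norm_bound_integral) (use assms integrable_on_const in auto)
  also have "integral S (\<lambda>x. B) = B * measure lebesgue S"
    using lmeasure_integral[OF assms(1)] integral_mult_right[of S B "\<lambda>x. 1"] by simp
  finally show ?thesis by simp
qed

lemma int_const:
  assumes "S \<in> lmeasurable"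
  shows "integral S (\<lambda>x. c) = c * measure lebesgue S"
  using lmeasure_integral[OF assms] integral_mult_right[of S c "\<lambda>x. 1"] by simp

lemma vol_ball:
  fixes x :: "'a::euclidean_space"
  assumes "r \<ge> 0"
  shows "measure lebesgue (ball x r) = r ^ DIM('a) * measure lebesgue (ball (0::'a) 1)"
  using content_ball_conv_unit_ball[OF assms, of x] by simp

lemma vol_mono:
  fixes x :: "'a::euclidean_space"
  assumes "0 \<le> a" "a < b"
  shows "measure lebesgue (ball x a) < measure lebesgue (ball x b)"
proof -
  have "a ^ DIM('a) < b ^ DIM('a)" using assms by (intro power_strict_mono) auto
  then show ?thesis using assms vol_ball[of a x] vol_ball[of b x] content_ball_pos[of 1 "0::'a"] vol_ball[of 1 "0::'a"]
    by simp
qed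

lemma int_cball_ball:
  fixes u :: "'a::euclidean_space \<Rightarrow> real"
  shows "integral (cball x r) u = integral (ball x r) u"
  by (rule integral_subset_negligible[symmetric]) (auto simp: cball_diff_eq_sphere negligible_sphere)

lemma annulus_facts:
  fixes u :: "'a::euclidean_space \<Rightarrow> real"
  assumes cont: "continuous_on (cball x R) u" and ab: "0 < a" "a < b" "b \<le> R"
  shows "integral (annulus x a b) u = integral (ball x b) u - integral (ball x a) u"
    and "measure lebesgue (annulus x a b) = measure lebesgue (ball x b) - measure lebesgue (ball x a)"
proof -
  have A: "annulus x a b = ball x b - cball x a" by (auto simp: annulus_def)
  have e: "cball x a - ball x b = {}" using ab by auto
  have sb: "ball x b \<subseteq> cball x R" "cball x a \<subseteq> cball x R" using ab by auto
  have "integral (ball x b - cball x a) u = integral (ball x b) u - integral (cball x a) u"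
    by (rule integral_setdiff) (use ab sb e in \<open>auto intro!: int_sub[OF compact_cball cont]\<close>)
  then show "integral (annulus x a b) u = integral (ball x b) u - integral (ball x a) u"
    by (simp add: A int_cball_ball)
  have "measure lebesgue (ball x b - cball x a) = measure lebesgue (ball x b) - measure lebesgue (cball x a)"
    by (rule measure_Diff) (use ab emeasure_lborel_ball_finite[of x b] in auto)
  then show "measure lebesgue (annulus x a b) = measure lebesgue (ball x b) - measure lebesgue (ball x a)"
    by (simp add: A content_cball_conv_ball)
qed


lemma ball_mvp_core:
  fixes u :: "'a::euclidean_space \<Rightarrow> real"
  assumes cont: "continuous_on (cball x R) u" and R: "R > 0"
    and E: "\<And>a b. 0 < a \<Longrightarrow> a < b \<Longrightarrow> b \<le> R \<Longrightarrow>
      integral (ball x b) u - integral (ball x a) u = c * (measure lebesgue (ball x b) - measure lebesgue (ball x a))"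
  shows "integral (ball x R) u = u x * measure lebesgue (ball x R)"
proof -
  define I where "I r = integral (ball x r) u" for r
  define V where "V r = measure lebesgue (ball x r)" for r
  define V1 where "V1 = measure lebesgue (ball (0::'a) 1)"
  have V1: "V1 > 0" using content_ball_pos[of 1 "0::'a"] by (simp add: V1_def)
  have Vr: "V r = r ^ DIM('a) * V1" if "r \<ge> 0" for r using vol_ball[OF that] by (simp add: V_def V1_def)
  have Vpos: "V r > 0" if "r > 0" for r using Vr[of r] that V1 by simp
  have xR: "x \<in> cball x R" using R by simp
  have "bounded (u ` cball x R)"
    using compact_imp_bounded[OF compact_continuous_image[OF cont compact_cball]] .
  then obtain M where M0: "\<forall>z\<in>u ` cball x R. \<bar>z\<bar> \<le> M" unfolding bounded_real by blast
  have M: "\<And>y. y \<in> cball x R \<Longrightarrow> \<bar>u y\<bar> \<le> M" using M0 by blast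
  have intb: "u integrable_on ball x r" if "r \<le> R" for r
    by (rule int_sub[OF compact_cball cont]) (use that in auto)
  have Ib: "\<bar>I a\<bar> \<le> M * V a" if "0 < a" "a \<le> R" for a
    unfolding I_def V_def by (rule int_bound) (use that M intb in auto)
  have IcV: "I b = c * V b" if b: "0 < b" "b \<le> R" for b
  proof -
    define e where "e = I b - c * V b"
    have ea: "e = I a - c * V a" if "0 < a" "a < b" for a
      using E[of a b] that b by (simp add: e_def I_def V_def algebra_simps)
    have "((\<lambda>a::real. e) \<longlongrightarrow> 0) (at_right 0)"
    proof (rule Lim_null_comparison[where g="\<lambda>a. (M + \<bar>c\<bar>) * V1 * a ^ DIM('a)"])
      have "eventually (\<lambda>a. 0 < a \<and> a < b) (at_right (0::real))"
        by (rule eventually_at_rightI[of 0 b]) (use b in auto)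
      then show "eventually (\<lambda>a. norm e \<le> (M + \<bar>c\<bar>) * V1 * a ^ DIM('a)) (at_right 0)"
      proof eventually_elim
        case (elim a)
        have "norm e = \<bar>I a - c * V a\<bar>" using ea[of a] elim by simp
        also have "\<dots> \<le> \<bar>I a\<bar> + \<bar>c\<bar> * V a" using Vpos[of a] elim abs_triangle_ineq4[of "I a" "c * V a"] by (simp add: abs_mult)
        also have "\<dots> \<le> M * V a + \<bar>c\<bar> * V a" using Ib[of a] elim b by simp
        also have "\<dots> = (M + \<bar>c\<bar>) * V1 * a ^ DIM('a)" using Vr[of a] elim by (simp add: algebra_simps)
        finally show ?case .
      qed
      show "((\<lambda>a. (M + \<bar>c\<bar>) * V1 * a ^ DIM('a)) \<longlongrightarrow> 0) (at_right 0)"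
        by (auto intro!: tendsto_eq_intros simp: DIM_positive)
    qed
    then have "e = 0" using tendsto_const[of e "at_right (0::real)"] tendsto_unique
      by (metis trivial_limit_at_right_real)
    then show ?thesis by (simp add: e_def)
  qed
  have cu: "c = u x"
  proof (rule ccontr)
    assume ne: "c \<noteq> u x"
    define \<epsilon> where "\<epsilon> = \<bar>c - u x\<bar> / 2"
    have "\<epsilon> > 0" using ne by (simp add: \<epsilon>_def)
    then obtain \<delta> where \<delta>: "\<delta> > 0" "\<And>y. y \<in> cball x R \<Longrightarrow> dist y x < \<delta> \<Longrightarrow> dist (u y) (u x) < \<epsilon>"
      using cont[unfolded continuous_on_iff] xR by blast
    define b where "b = min \<delta> R"
    have b: "0 < b" "b \<le> R" using \<delta> R by (auto simp: b_def)
    have "I b - u x * V b = integral (ball x b) (\<lambda>y. u y - u x)"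
      unfolding I_def V_def using intb[OF b(2)]
      by (simp add: integral_diff int_const integrable_on_const)
    also have "\<bar>\<dots>\<bar> \<le> \<epsilon> * V b" unfolding V_def
    proof (rule int_bound)
      show "(\<lambda>y. u y - u x) integrable_on ball x b"
        using intb[OF b(2)] by (simp add: integrable_diff integrable_on_const)
      fix y assume y: "y \<in> ball x b"
      then have "y \<in> cball x R" "dist y x < \<delta>" using b by (auto simp: b_def dist_commute)
      then show "\<bar>u y - u x\<bar> \<le> \<epsilon>" using \<delta>(2)[of y] by (simp add: dist_real_def)
    qed simp
    finally have "\<bar>(c - u x) * V b\<bar> \<le> \<epsilon> * V b" using IcV[OF b] by (simp add: algebra_simps)
    then have "\<bar>c - u x\<bar> * V b \<le> \<epsilon> * V b" using Vpos[OF b(1)] by (simp add: abs_mult)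
    then have "\<bar>c - u x\<bar> \<le> \<epsilon>" using Vpos[OF b(1)] by simp
    then show False using ne by (simp add: \<epsilon>_def)
  qed
  show ?thesis using IcV[of R] R cu by (simp add: I_def V_def)
qed


lemma reduce_cases:
  fixes I V g :: "real \<Rightarrow> real"
  assumes Vm: "\<And>a b. 0 < a \<Longrightarrow> a < b \<Longrightarrow> V a < V b" and R: "R > 0"
  and H: "(\<forall>a b \<rho>. 0 < a \<and> a < \<rho> \<and> \<rho> < b \<and> b \<le> R \<longrightarrow> I b - I a = g \<rho> * (V b - V a))
        \<or> (\<forall>a b. 0 < a \<and> a < b \<and> b \<le> R \<longrightarrow> I b - I a = g a * (V b - V a))
        \<or> (\<forall>a b. 0 < a \<and> a < b \<and> b \<le> R \<longrightarrow> I b - I a = g b * (V b - V a))"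
  shows "\<exists>c. \<forall>a b. 0 < a \<longrightarrow> a < b \<longrightarrow> b \<le> R \<longrightarrow> I b - I a = c * (V b - V a)"
proof -
  have canc: "p = q" if "p * X = q * X" "X > 0" for p q X :: real using that by simp
  consider (c1) "\<forall>a b \<rho>. 0 < a \<and> a < \<rho> \<and> \<rho> < b \<and> b \<le> R \<longrightarrow> I b - I a = g \<rho> * (V b - V a)"
    | (c2) "\<forall>a b. 0 < a \<and> a < b \<and> b \<le> R \<longrightarrow> I b - I a = g a * (V b - V a)"
    | (c3) "\<forall>a b. 0 < a \<and> a < b \<and> b \<le> R \<longrightarrow> I b - I a = g b * (V b - V a)"
    using H by blast
  then show ?thesis
  proof cases
    case c1
    have gs: "g s = g (R/2)" if "0 < s" "s < R" for s
    proof -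
      define a where "a = min s (R/2) / 2"
      have a: "0 < a" "a < s" "a < R/2" using that R by (auto simp: a_def)
      have e1: "I R - I a = g s * (V R - V a)" using c1 a that R by blast
      have e2: "I R - I a = g (R/2) * (V R - V a)" proof -
        have "R/2 < R" using R by simp
        then show ?thesis using c1 a R by blast
      qed
      have "g s * (V R - V a) = g (R/2) * (V R - V a)" using e1 e2 by metis
      then show ?thesis by (rule canc) (use Vm[of a R] a that in auto)
    qed
    show ?thesis
    proof (intro exI allI impI)
      fix a b :: real assume ab: "0 < a" "a < b" "b \<le> R"
      have "I b - I a = g ((a+b)/2) * (V b - V a)" using c1 ab by auto
      also have "g ((a+b)/2) = g (R/2)" using gs[of "(a+b)/2"] ab by auto
      finally show "I b - I a = g (R/2) * (V b - V a)" .
    qed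
  next
    case c2
    have gm: "g a = g a'" if "0 < a" "a < a'" "a' < R" for a a'
    proof -
      have e1: "I R - I a = g a * (V R - V a)" using c2 that by auto
      have e2: "I R - I a' = g a' * (V R - V a')" using c2 that by auto
      have e3: "I a' - I a = g a * (V a' - V a)" using c2 that by auto
      have "g a * (V R - V a') = g a * (V R - V a) - g a * (V a' - V a)" by (simp add: algebra_simps)
      also have "\<dots> = (I R - I a) - (I a' - I a)" using e1 e3 by simp
      also have "\<dots> = I R - I a'" by simp
      also have "\<dots> = g a' * (V R - V a')" using e2 by simp
      finally have "g a * (V R - V a') = g a' * (V R - V a')" .
      then show ?thesis by (rule canc) (use Vm[of a' R] that in auto)
    qed
    have gs: "g s = g (R/2)" if "0 < s" "s < R" for s
    proof -
      consider "s < R/2" | "s = R/2" | "s > R/2" by linarith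
      then show ?thesis
      proof cases
        case 1 then show ?thesis using gm[of s "R/2"] that R by simp
      next
        case 2 then show ?thesis by (simp only:)
      next
        case 3 then show ?thesis using gm[of "R/2" s] that R by simp
      qed
    qed
    show ?thesis
    proof (intro exI allI impI)
      fix a b :: real assume ab: "0 < a" "a < b" "b \<le> R"
      have "I b - I a = g a * (V b - V a)" using c2 ab by auto
      also have "g a = g (R/2)" using gs[of a] ab by auto
      finally show "I b - I a = g (R/2) * (V b - V a)" .
    qed
  next
    case c3
    have gm: "g b = g d" if "0 < b" "b < d" "d \<le> R" for b d
    proof -
      have e1: "I d - I (b/2) = g d * (V d - V (b/2))" using c3 that by auto
      have e2: "I d - I b = g d * (V d - V b)" using c3 that by auto
      have e3: "I b - I (b/2) = g b * (V b - V (b/2))" using c3 that by auto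
      have "g d * (V b - V (b/2)) = g d * (V d - V (b/2)) - g d * (V d - V b)" by (simp add: algebra_simps)
      also have "\<dots> = (I d - I (b/2)) - (I d - I b)" using e1 e2 by simp
      also have "\<dots> = I b - I (b/2)" by simp
      also have "\<dots> = g b * (V b - V (b/2))" using e3 by simp
      finally have "g b * (V b - V (b/2)) = g d * (V b - V (b/2))" by (rule sym)
      then show ?thesis by (rule canc) (use Vm[of "b/2" b] that in auto)
    qed
    show ?thesis
    proof (intro exI allI impI)
      fix a b :: real assume ab: "0 < a" "a < b" "b \<le> R"
      have "I b - I a = g b * (V b - V a)" using c3 ab by auto
      also have "g b = g R" using gm[of b R] ab by (cases "b = R") auto
      finally show "I b - I a = g R * (V b - V a)" .
    qed
  qed
qed


lemma radial_mvp:
  fixes u :: "'a::euclidean_space \<Rightarrow> real" and \<psi> :: "real \<Rightarrow> real"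
  assumes cont: "continuous_on (cball x R) u" and R: "R > 0"
    and mvp: "\<And>r. 0 < r \<Longrightarrow> r \<le> R \<Longrightarrow> integral (ball x r) u = u x * measure lebesgue (ball x r)"
    and psi: "continuous_on {0..R} \<psi>"
  shows "integral (ball x R) (\<lambda>y. u y * \<psi> (norm (y - x))) = u x * integral (ball x R) (\<lambda>y. \<psi> (norm (y - x)))"
proof -
  define v where "v y = u y - u x" for y
  define V where "V r = measure lebesgue (ball x r)" for r
  define f where "f y = v y * \<psi> (norm (y - x))" for y
  define G where "G r = integral (ball x r) f" for r
  have cv: "continuous_on (cball x R) v" unfolding v_def by (intro continuous_intros cont)
  have cp: "continuous_on (cball x R) (\<lambda>y. \<psi> (norm (y - x)))"
    by (rule continuous_on_compose2[OF psi, of _ "\<lambda>y. norm (y - x)"])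
       (auto intro!: continuous_intros simp: dist_norm norm_minus_commute)
  have cf: "continuous_on (cball x R) f" unfolding f_def by (intro continuous_intros cv cp)
  have xR: "x \<in> cball x R" using R by simp
  have intg: "g integrable_on S" if "continuous_on (cball x R) g" "S \<in> sets lebesgue" "S \<subseteq> cball x R" for g :: "'a \<Rightarrow> real" and S
    by (rule int_sub[OF compact_cball that(1) that(2,3)])
  have intv0: "integral (ball x r) v = 0" if "0 \<le> r" "r \<le> R" for r
  proof (cases "r = 0")
    case True then show ?thesis by simp
  next
    case False
    then have "0 < r" using that by simp
    have "integral (ball x r) v = integral (ball x r) u - integral (ball x r) (\<lambda>y. u x)"
      unfolding v_def by (rule integral_diff) (use that in \<open>auto intro!: intg cont integrable_on_const\<close>)
    then show ?thesis using mvp[OF \<open>0 < r\<close> that(2)] by (simp add: int_const)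
  qed
  have "bounded (v ` cball x R)"
    using compact_imp_bounded[OF compact_continuous_image[OF cv compact_cball]] .
  then obtain M where M0: "\<forall>z\<in>v ` cball x R. \<bar>z\<bar> \<le> M" unfolding bounded_real by blast
  have M: "\<And>y. y \<in> cball x R \<Longrightarrow> \<bar>v y\<bar> \<le> M" using M0 by blast
  have Mnn: "M \<ge> 0" using M[OF xR] by simp
  have key: "\<bar>G t - G s\<bar> \<le> M * \<epsilon> * (V t - V s)"
    if st: "0 \<le> s" "s \<le> t" "t \<le> R" and eps: "\<And>\<rho>. s \<le> \<rho> \<Longrightarrow> \<rho> \<le> t \<Longrightarrow> \<bar>\<psi> \<rho> - \<psi> s\<bar> \<le> \<epsilon>" for s t \<epsilon>
  proof -
    define A where "A = ball x t - ball x s"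
    have sub: "ball x s \<subseteq> ball x t" using st by auto
    have Asub: "A \<subseteq> cball x R" using st by (auto simp: A_def)
    have Am: "A \<in> lmeasurable" unfolding A_def by (intro fmeasurable_Diff) auto
    have "G t - G s = integral A f"
      unfolding G_def A_def
      by (rule integral_setdiff[symmetric]) (use st sub in \<open>auto intro!: intg cf\<close>)
    also have "\<dots> = integral A (\<lambda>y. v y * (\<psi> (norm (y - x)) - \<psi> s)) + \<psi> s * integral A v"
    proof -
      have i1: "(\<lambda>y. v y * (\<psi> (norm (y - x)) - \<psi> s)) integrable_on A"
        by (rule intg) (use Am Asub in \<open>auto intro!: continuous_intros cv cp\<close>)
      have i2: "v integrable_on A" by (rule intg) (use Am Asub cv in auto)
      have "integral A f = integral A (\<lambda>y. v y * (\<psi> (norm (y - x)) - \<psi> s) + \<psi> s * v y)"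
        unfolding f_def by (rule integral_cong) (simp add: algebra_simps)
      also have "\<dots> = integral A (\<lambda>y. v y * (\<psi> (norm (y - x)) - \<psi> s)) + integral A (\<lambda>y. \<psi> s * v y)"
        by (rule integral_add[OF i1]) (use integrable_cmul[OF i2, of "\<psi> s"] in simp)
      finally show ?thesis by simp
    qed
    also have "integral A v = 0"
    proof -
      have "integral A v = integral (ball x t) v - integral (ball x s) v"
        unfolding A_def by (rule integral_setdiff) (use st sub in \<open>auto intro!: intg cv\<close>)
      then show ?thesis using intv0[of t] intv0[of s] st by simp
    qed
    finally have "\<bar>G t - G s\<bar> = \<bar>integral A (\<lambda>y. v y * (\<psi> (norm (y - x)) - \<psi> s))\<bar>" by simp
    also have "\<dots> \<le> (M * \<epsilon>) * measure lebesgue A"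
    proof (rule int_bound[OF Am])
      show "(\<lambda>y. v y * (\<psi> (norm (y - x)) - \<psi> s)) integrable_on A"
        by (rule intg) (use Am Asub in \<open>auto intro!: continuous_intros cv cp\<close>)
      fix y assume y: "y \<in> A"
      then have "s \<le> norm (y - x)" "norm (y - x) \<le> t" "y \<in> cball x R"
        using Asub by (auto simp: A_def dist_norm norm_minus_commute)
      then have "\<bar>\<psi> (norm (y - x)) - \<psi> s\<bar> \<le> \<epsilon>" "\<bar>v y\<bar> \<le> M" using eps M by auto
      then show "\<bar>v y * (\<psi> (norm (y - x)) - \<psi> s)\<bar> \<le> M * \<epsilon>"
        by (simp add: abs_mult mult_mono')
    qed
    also have "measure lebesgue A = V t - V s"
      unfolding A_def V_def
      by (rule measure_Diff) (use sub emeasure_lborel_ball_finite[of x t] in auto)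
    finally show ?thesis .
  qed
  have Gbound: "\<bar>G R\<bar> \<le> \<epsilon> * (M * V R)" if "\<epsilon> > 0" for \<epsilon>
  proof -
    have "uniformly_continuous_on {0..R} \<psi>"
      by (rule compact_uniformly_continuous[OF psi compact_Icc])
    then obtain \<delta> where \<delta>: "\<delta> > 0" "\<And>a b. a \<in> {0..R} \<Longrightarrow> b \<in> {0..R} \<Longrightarrow> dist b a < \<delta> \<Longrightarrow> dist (\<psi> b) (\<psi> a) < \<epsilon>"
      unfolding uniformly_continuous_on_def using \<open>\<epsilon> > 0\<close> by metis
    obtain n :: nat where n: "R / \<delta> < real n" using reals_Archimedean2 by blast
    have npos: "n > 0" using n R \<delta> by (cases n) (auto simp: field_simps)
    define t where "t i = R * real i / real n" for i
    have t0: "t 0 = 0" and tn: "t n = R" using npos by (auto simp: t_def)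
    have tstep: "t (Suc i) - t i = R / real n" for i by (simp add: t_def add_divide_distrib[symmetric] algebra_simps)
    have step_lt: "R / real n < \<delta>" using n npos \<delta> R by (simp add: field_simps)
    have tmono: "0 \<le> t i" "t i \<le> t (Suc i)" for i using R npos by (auto simp: t_def field_simps)
    have tle: "t (Suc i) \<le> R" if "i < n" for i
    proof -
      have "R * real (Suc i) \<le> R * real n" using that R by (intro mult_left_mono) auto
      then show ?thesis unfolding t_def using npos by (simp add: pos_divide_le_eq del: of_nat_Suc)
    qed
    have each: "\<bar>G (t (Suc i)) - G (t i)\<bar> \<le> M * \<epsilon> * (V (t (Suc i)) - V (t i))" if "i < n" for i
    proof (rule key)
      show "0 \<le> t i" "t i \<le> t (Suc i)" "t (Suc i) \<le> R" using tmono tle that by auto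
      fix \<rho> assume \<rho>: "t i \<le> \<rho>" "\<rho> \<le> t (Suc i)"
      have "dist \<rho> (t i) < \<delta>" using \<rho> tstep[of i] step_lt by (simp add: dist_real_def)
      moreover have "t i \<in> {0..R}" "\<rho> \<in> {0..R}" using \<rho> tmono[of i] tle[OF that] by auto
      ultimately have "dist (\<psi> \<rho>) (\<psi> (t i)) < \<epsilon>" using \<delta>(2) by blast
      then show "\<bar>\<psi> \<rho> - \<psi> (t i)\<bar> \<le> \<epsilon>" by (simp add: dist_real_def)
    qed
    have "G R = (\<Sum>i<n. G (t (Suc i)) - G (t i))"
      using sum_lessThan_telescope[of "\<lambda>i. G (t i)" n] t0 tn by (simp add: G_def)
    also have "\<bar>\<dots>\<bar> \<le> (\<Sum>i<n. \<bar>G (t (Suc i)) - G (t i)\<bar>)" by (rule sum_abs)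
    also have "\<dots> \<le> (\<Sum>i<n. M * \<epsilon> * (V (t (Suc i)) - V (t i)))" by (rule sum_mono) (use each in auto)
    also have "\<dots> = M * \<epsilon> * (V R - V 0)"
      using sum_lessThan_telescope[of "\<lambda>i. V (t i)" n] t0 tn by (simp add: sum_distrib_left[symmetric])
    also have "V 0 = 0" by (simp add: V_def)
    finally show ?thesis by (simp add: algebra_simps)
  qed
  have "G R = 0"
  proof -
    have VR: "V R \<ge> 0" by (simp add: V_def)
    have "\<bar>G R\<bar> \<le> 0 + e" if "e > 0" for e
    proof -
      have "\<bar>G R\<bar> \<le> (e / (M * V R + 1)) * (M * V R)" by (rule Gbound) (use that Mnn VR in \<open>simp add: add_nonneg_pos\<close>)
      also have "\<dots> \<le> (e / (M * V R + 1)) * (M * V R + 1)"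
        by (rule mult_left_mono) (use that Mnn VR in auto)
      also have "\<dots> = e"
      proof -
        have "M * V R + 1 > 0" using Mnn VR by (simp add: add_nonneg_pos)
        then show ?thesis by simp
      qed
      finally show ?thesis by simp
    qed
    then have "\<bar>G R\<bar> \<le> 0" by (rule field_le_epsilon)
    then show ?thesis by simp
  qed
  moreover have "G R = integral (ball x R) (\<lambda>y. u y * \<psi> (norm (y - x))) - u x * integral (ball x R) (\<lambda>y. \<psi> (norm (y - x)))"
  proof -
    have i1: "(\<lambda>y. u y * \<psi> (norm (y - x))) integrable_on ball x R" by (rule intg) (auto intro!: continuous_intros cont cp)
    have i2: "(\<lambda>y. u x * \<psi> (norm (y - x))) integrable_on ball x R" by (rule intg) (auto intro!: continuous_intros cont cp)
    have "G R = integral (ball x R) (\<lambda>y. u y * \<psi> (norm (y - x)) - u x * \<psi> (norm (y - x)))"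
      unfolding G_def f_def v_def by (rule integral_cong) (simp add: algebra_simps)
    also have "\<dots> = integral (ball x R) (\<lambda>y. u y * \<psi> (norm (y - x))) - integral (ball x R) (\<lambda>y. u x * \<psi> (norm (y - x)))"
      by (rule integral_diff[OF i1 i2])
    finally show ?thesis by simp
  qed
  ultimately show ?thesis by simp
qed


lemma support_int:
  fixes F :: "'a::euclidean_space \<Rightarrow> real"
  assumes "S \<subseteq> T" "\<And>y. y \<in> T \<Longrightarrow> y \<notin> S \<Longrightarrow> F y = 0"
  shows "integral T F = integral S F"
proof -
  have "integral T F = integral T (\<lambda>y. if y \<in> S then F y else 0)"
    by (rule integral_cong) (use assms in auto)
  also have "\<dots> = integral (S \<inter> T) F" by (rule integral_restrict_Int)
  finally show ?thesis using assms(1) by (simp add: Int_absorb2)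
qed

lemma kap_zero: "r\<^sup>2 \<le> s \<Longrightarrow> kap r s = 0" "r\<^sup>2 \<le> s \<Longrightarrow> kap1 r s = 0" "r\<^sup>2 \<le> s \<Longrightarrow> kap2 r s = 0"
  by (auto simp: kap_def kap1_def kap2_def max_def)

lemma outside_ball_sq:
  fixes x y :: "'a::euclidean_space"
  assumes "y \<notin> ball x r" "r > 0"
  shows "r\<^sup>2 \<le> (y - x) \<bullet> (y - x)"
proof -
  have "r \<le> norm (y - x)" using assms by (auto simp: dist_norm norm_minus_commute)
  then have "r\<^sup>2 \<le> (norm (y - x))\<^sup>2" using assms by (intro power_mono) auto
  then show ?thesis by (simp add: power2_norm_eq_inner)
qed

lemma C_pos:
  assumes r: "r > 0"
  shows "integral (ball (0::'a::euclidean_space) r) (\<lambda>z. kap r (z \<bullet> z)) > 0"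
proof -
  have ck: "continuous_on (cball (0::'a) r) (\<lambda>z. kap r (z \<bullet> z))" by (intro continuous_intros)
  define k0 where "k0 = kap r (r\<^sup>2 / 4)"
  have k0: "k0 > 0" using r by (simp add: k0_def kap_def)
  have "0 < k0 * measure lebesgue (ball (0::'a) (r/2))"
    using k0 content_ball_pos[of "r/2" "0::'a"] r by simp
  also have "\<dots> = integral (ball (0::'a) (r/2)) (\<lambda>z. k0)" by (simp add: int_const)
  also have "\<dots> \<le> integral (ball (0::'a) (r/2)) (\<lambda>z. kap r (z \<bullet> z))"
  proof (rule integral_le)
    show "(\<lambda>z. k0) integrable_on ball (0::'a) (r/2)" by (simp add: integrable_on_const)
    show "(\<lambda>z. kap r (z \<bullet> z)) integrable_on ball (0::'a) (r/2)"
      by (rule int_sub[OF compact_cball ck]) (use r in auto)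
    fix z :: 'a assume z: "z \<in> ball 0 (r/2)"
    then have "norm z < r/2" by simp
    then have "(norm z)\<^sup>2 \<le> (r/2)\<^sup>2" by (intro power_mono) auto
    then have zz: "z \<bullet> z \<le> r\<^sup>2 / 4" by (simp add: power2_norm_eq_inner power_divide)
    have "max 0 (r\<^sup>2 - r\<^sup>2 / 4) ^ 3 \<le> max 0 (r\<^sup>2 - z \<bullet> z) ^ 3"
      by (intro power_mono max.mono) (use zz in auto)
    then show "k0 \<le> kap r (z \<bullet> z)" by (simp add: k0_def kap_def)
  qed
  also have "\<dots> \<le> integral (ball (0::'a) r) (\<lambda>z. kap r (z \<bullet> z))"
  proof (rule integral_subset_le)
    show "ball (0::'a) (r/2) \<subseteq> ball 0 r" using r by auto
    show "(\<lambda>z. kap r (z \<bullet> z)) integrable_on ball (0::'a) (r/2)"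
      by (rule int_sub[OF compact_cball ck]) (use r in auto)
    show "(\<lambda>z. kap r (z \<bullet> z)) integrable_on ball (0::'a) r"
      by (rule int_sub[OF compact_cball ck]) auto
    show "\<forall>x\<in>ball 0 r. 0 \<le> kap r (x \<bullet> x)" by (simp add: kap_def)
  qed
  finally show ?thesis .
qed

lemma Phi1_const:
  fixes a b :: "'a::euclidean_space"
  assumes r: "r > 0" and sub: "ball x r \<subseteq> cbox a b"
  shows "Phi (\<lambda>_. 1) a b r x = integral (ball (0::'a) r) (\<lambda>z. kap r (z \<bullet> z))"
proof -
  have "Phi (\<lambda>_. 1) a b r x = integral (cbox (a - x) (b - x)) (\<lambda>z. 1 * kap r ((z + x - x) \<bullet> (z + x - x)))"
    unfolding Phi_def using integral_shift_cbox[where f="\<lambda>y. 1 * kap r ((y - x) \<bullet> (y - x))" and a=a and b=b and c=x] by simp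
  also have "\<dots> = integral (cbox (a - x) (b - x)) (\<lambda>z. kap r (z \<bullet> z))" by simp
  also have "\<dots> = integral (ball (0::'a) r) (\<lambda>z. kap r (z \<bullet> z))"
  proof (rule support_int)
    show "ball 0 r \<subseteq> cbox (a - x) (b - x)"
    proof
      fix z :: 'a assume "z \<in> ball 0 r"
      then have "z + x \<in> ball x r" by (simp add: dist_norm)
      then have "z + x \<in> cbox a b" using sub by auto
      then show "z \<in> cbox (a - x) (b - x)" by (auto simp: mem_box algebra_simps inner_simps)
    qed
    fix z :: 'a assume "z \<notin> ball 0 r"
    then have "r\<^sup>2 \<le> (z - 0) \<bullet> (z - 0)" using outside_ball_sq r by blast
    then show "kap r (z \<bullet> z) = 0" using kap_zero by simp
  qed
  finally show ?thesis .
qed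


lemma lap_sum:
  fixes w :: "'a::euclidean_space \<Rightarrow> real"
  assumes w: "continuous_on (cbox a b) w"
  shows "(\<Sum>i\<in>Basis. Phi2 w a b r x i i) = integral (cbox a b) (\<lambda>y. w y * (4 * kap2 r ((y - x) \<bullet> (y - x)) * ((y - x) \<bullet> (y - x))
      + 2 * real DIM('a) * kap1 r ((y - x) \<bullet> (y - x))))"
proof -
  have "(\<Sum>i\<in>Basis. Phi2 w a b r x i i) = integral (cbox a b) (\<lambda>y. \<Sum>i\<in>Basis. w y * (4 * kap2 r ((y - x) \<bullet> (y - x)) * ((y - x) \<bullet> i) * ((y - x) \<bullet> i)
      + 2 * kap1 r ((y - x) \<bullet> (y - x)) * (i \<bullet> i)))"
    unfolding Phi2_def
    by (rule integral_sum[symmetric]) (auto intro!: integrable_continuous continuous_intros w)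
  also have "\<dots> = integral (cbox a b) (\<lambda>y. w y * (4 * kap2 r ((y - x) \<bullet> (y - x)) * ((y - x) \<bullet> (y - x))
      + 2 * real DIM('a) * kap1 r ((y - x) \<bullet> (y - x))))"
  proof (rule integral_cong)
    fix y
    define z where "z = y - x"
    have "(\<Sum>i\<in>Basis. w y * (4 * kap2 r (z \<bullet> z) * (z \<bullet> i) * (z \<bullet> i) + 2 * kap1 r (z \<bullet> z) * (i \<bullet> i)))
        = (\<Sum>i\<in>Basis. w y * 4 * kap2 r (z \<bullet> z) * ((z \<bullet> i) * (z \<bullet> i)) + w y * 2 * kap1 r (z \<bullet> z))"
      by (rule sum.cong) (auto simp: algebra_simps)
    also have "\<dots> = w y * 4 * kap2 r (z \<bullet> z) * (\<Sum>i\<in>Basis. (z \<bullet> i) * (z \<bullet> i)) + real DIM('a) * (w y * 2 * kap1 r (z \<bullet> z))"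
      by (simp add: sum.distrib sum_distrib_left)
    also have "(\<Sum>i\<in>Basis. (z \<bullet> i) * (z \<bullet> i)) = z \<bullet> z" by (rule euclidean_inner[symmetric])
    finally show "(\<Sum>i\<in>Basis. w y * (4 * kap2 r ((y - x) \<bullet> (y - x)) * ((y - x) \<bullet> i) * ((y - x) \<bullet> i)
      + 2 * kap1 r ((y - x) \<bullet> (y - x)) * (i \<bullet> i))) = w y * (4 * kap2 r ((y - x) \<bullet> (y - x)) * ((y - x) \<bullet> (y - x))
      + 2 * real DIM('a) * kap1 r ((y - x) \<bullet> (y - x)))"
      by (simp add: z_def algebra_simps)
  qed
  finally show ?thesis .
qed

lemma local_rep:
  fixes u :: "'a::euclidean_space \<Rightarrow> real"
  assumes oD: "open D" and cont: "continuous_on D u" and x0: "x0 \<in> D"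
    and mvpD: "\<And>x r. x \<in> D \<Longrightarrow> 0 < r \<Longrightarrow> cball x r \<subseteq> D \<Longrightarrow> integral (ball x r) u = u x * measure lebesgue (ball x r)"
  obtains U a b r C where "open U" "x0 \<in> U" "C \<noteq> 0" "continuous_on (cbox a b) u"
    "\<And>x. x \<in> U \<Longrightarrow> u x = Phi u a b r x / C"
    "\<And>x. x \<in> U \<Longrightarrow> (\<Sum>i\<in>Basis. Phi2 u a b r x i i) = 0"
proof -
  obtain a b where ab: "cbox a b \<subseteq> D" "x0 \<in> box a b" using open_contains_cbox[OF oD x0] by metis
  obtain e where e: "e > 0" "ball x0 e \<subseteq> box a b" using open_contains_ball[of "box a b"] ab(2) open_box by blast
  define \<rho> where "\<rho> = e / 3"
  have \<rho>: "\<rho> > 0" using e by (simp add: \<rho>_def)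
  define U where "U = ball x0 \<rho>"
  have cb: "cball x \<rho> \<subseteq> cbox a b" if "x \<in> U" for x
  proof
    fix y assume "y \<in> cball x \<rho>"
    then have "dist x0 y < e" using that dist_triangle[of x0 y x] e(1) by (auto simp: U_def \<rho>_def)
    then have "y \<in> ball x0 e" by simp
    then show "y \<in> cbox a b" using e(2) box_subset_cbox[of a b] by blast
  qed
  have bc: "ball x \<rho> \<subseteq> cbox a b" if "x \<in> U" for x using cb[OF that] by auto
  have cu: "continuous_on (cbox a b) u" using continuous_on_subset[OF cont ab(1)] .
  have c1: "continuous_on (cbox a b) (\<lambda>_. 1::real)" by simp
  define C where "C = integral (ball (0::'a) \<rho>) (\<lambda>z. kap \<rho> (z \<bullet> z))"
  have Cpos: "C > 0" using C_pos[OF \<rho>] by (simp add: C_def)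
  have nq: "(y - x) \<bullet> (y - x) = (norm (y - x))\<^sup>2" for x y :: 'a by (simp add: power2_norm_eq_inner)
  have rad: "integral (cbox a b) (\<lambda>y. u y * P (norm (y - x))) = u x * integral (cbox a b) (\<lambda>y. 1 * P (norm (y - x)))"
    if x: "x \<in> U" and P: "continuous_on {0..\<rho>} P" and Pz: "\<And>t. \<rho> \<le> t \<Longrightarrow> P t = 0" for x P
  proof -
    have "x \<in> cball x \<rho>" using \<rho> by simp
    then have xD: "x \<in> D" using cb[OF x] ab(1) by blast
    have cx: "continuous_on (cball x \<rho>) u" using continuous_on_subset[OF cu cb[OF x]] .
    have supp: "integral (cbox a b) (\<lambda>y. w y * P (norm (y - x))) = integral (ball x \<rho>) (\<lambda>y. w y * P (norm (y - x)))" for w :: "'a \<Rightarrow> real"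
    proof (rule support_int[OF bc[OF x]])
      fix y assume "y \<notin> ball x \<rho>"
      then have "\<rho> \<le> norm (y - x)" by (simp add: dist_norm norm_minus_commute)
      then show "w y * P (norm (y - x)) = 0" using Pz by simp
    qed
    have "integral (ball x \<rho>) (\<lambda>y. u y * P (norm (y - x))) = u x * integral (ball x \<rho>) (\<lambda>y. P (norm (y - x)))"
    proof (rule radial_mvp[OF cx \<rho> _ P])
      fix r :: real assume r: "0 < r" "r \<le> \<rho>"
      have "cball x r \<subseteq> cball x \<rho>" using r(2) by (rule subset_cball)
      then have "cball x r \<subseteq> D" using cb[OF x] ab(1) by blast
      then show "integral (ball x r) u = u x * measure lebesgue (ball x r)" using mvpD[OF xD r(1)] by simp
    qed
    then show ?thesis using supp[of u] supp[of "\<lambda>_. 1"] by simp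
  qed
  have urep: "u x = Phi u a b \<rho> x / C" if x: "x \<in> U" for x
  proof -
    have P: "continuous_on {0..\<rho>} (\<lambda>t. kap \<rho> (t\<^sup>2))" by (intro continuous_intros)
    have Pz: "kap \<rho> (t\<^sup>2) = 0" if "\<rho> \<le> t" for t
      by (rule kap_zero) (use that \<rho> in \<open>auto intro: power_mono\<close>)
    have "Phi u a b \<rho> x = u x * Phi (\<lambda>_. 1) a b \<rho> x"
      using rad[OF x P Pz] unfolding Phi_def by (simp add: nq)
    also have "Phi (\<lambda>_. 1) a b \<rho> x = C" unfolding C_def by (rule Phi1_const[OF \<rho> bc[OF x]])
    finally show ?thesis using Cpos by simp
  qed
  have Phi1_zero: "Phi1 (\<lambda>_. 1) a b \<rho> y = (\<lambda>h. 0)" if y: "y \<in> U" for y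
  proof (rule has_derivative_unique[OF Phi_deriv[OF c1]])
    show "(Phi (\<lambda>_. 1) a b \<rho> has_derivative (\<lambda>h. 0)) (at y)"
    proof (rule has_derivative_transform_within_open[OF has_derivative_const[of C] _ y])
      show "open U" by (simp add: U_def)
      fix z assume "z \<in> U"
      then show "C = Phi (\<lambda>_. 1) a b \<rho> z" unfolding C_def by (rule Phi1_const[OF \<rho> bc, symmetric])
    qed
  qed
  have Phi2_zero: "Phi2 (\<lambda>_. 1) a b \<rho> x h = (\<lambda>l. 0)" if x: "x \<in> U" for x h
  proof (rule has_derivative_unique[OF Phi1_deriv[OF c1]])
    show "((\<lambda>y. Phi1 (\<lambda>_. 1) a b \<rho> y h) has_derivative (\<lambda>l. 0)) (at x)"
    proof (rule has_derivative_transform_within_open[OF has_derivative_const[of 0] _ x])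
      show "open U" by (simp add: U_def)
      fix z assume "z \<in> U"
      then show "0 = Phi1 (\<lambda>_. 1) a b \<rho> z h" using Phi1_zero by simp
    qed
  qed
  have lap: "(\<Sum>i\<in>Basis. Phi2 u a b \<rho> x i i) = 0" if x: "x \<in> U" for x
  proof -
    define P where "P t = 4 * kap2 \<rho> (t\<^sup>2) * t\<^sup>2 + 2 * real DIM('a) * kap1 \<rho> (t\<^sup>2)" for t
    have Pc: "continuous_on {0..\<rho>} P" unfolding P_def by (intro continuous_intros)
    have Pz: "P t = 0" if "\<rho> \<le> t" for t
    proof -
      have "\<rho>\<^sup>2 \<le> t\<^sup>2" using that \<rho> by (intro power_mono) auto
      then show ?thesis by (simp add: P_def kap_zero)
    qed
    have L: "(\<Sum>i\<in>Basis. Phi2 w a b \<rho> x i i) = integral (cbox a b) (\<lambda>y. w y * P (norm (y - x)))"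
      if "continuous_on (cbox a b) w" for w
      unfolding lap_sum[OF that] P_def by (simp add: nq)
    have "(\<Sum>i\<in>Basis. Phi2 u a b \<rho> x i i) = u x * (\<Sum>i\<in>Basis. Phi2 (\<lambda>_. 1) a b \<rho> x i i)"
      using rad[OF x Pc Pz] L[OF cu] L[OF c1] by simp
    also have "(\<Sum>i\<in>Basis. Phi2 (\<lambda>_. 1) a b \<rho> x i i) = 0" using Phi2_zero[OF x] by simp
    finally show ?thesis by simp
  qed
  show ?thesis
    by (rule that[of U C a b \<rho>]) (use Cpos cu urep lap in \<open>auto simp: U_def \<rho>\<close>)
qed


lemma loc_lemma:
  fixes u :: "'a::euclidean_space \<Rightarrow> real"
  assumes oD: "open D" and cont: "continuous_on D u" and x: "x \<in> D"
    and mvpD: "\<And>x r. x \<in> D \<Longrightarrow> 0 < r \<Longrightarrow> cball x r \<subseteq> D \<Longrightarrow> integral (ball x r) u = u x * measure lebesgue (ball x r)"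
    and u'_def: "u' = (\<lambda>x. frechet_derivative u (at x))"
    and u''_def: "u'' = (\<lambda>x v. frechet_derivative (\<lambda>y. u' y v) (at x))"
  obtains U where "open U" "x \<in> U"
    "\<And>y. y \<in> U \<Longrightarrow> (u has_derivative u' y) (at y)"
    "\<And>y v. y \<in> U \<Longrightarrow> ((\<lambda>z. u' z v) has_derivative u'' y v) (at y)"
    "\<And>y. y \<in> U \<Longrightarrow> (\<Sum>i\<in>Basis. u'' y i i) = 0"
    "\<And>v w. continuous_on U (\<lambda>y. u'' y v w)"
proof (rule local_rep[OF oD cont x mvpD])
  fix U C a b r assume U: "open U" "x \<in> U" and C: "C \<noteq> 0" and cu: "continuous_on (cbox a b) u"
    and urep: "\<And>y. y \<in> U \<Longrightarrow> u y = Phi u a b r y / C"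
    and lap: "\<And>y. y \<in> U \<Longrightarrow> (\<Sum>i\<in>Basis. Phi2 u a b r y i i) = 0"
  have d1: "(u has_derivative (\<lambda>h. Phi1 u a b r y h / C)) (at y)" if y: "y \<in> U" for y
  proof (rule has_derivative_transform_within_open[OF _ U(1) y])
    show "((\<lambda>z. Phi u a b r z / C) has_derivative (\<lambda>h. Phi1 u a b r y h / C)) (at y)"
      by (rule has_derivative_eq_rhs[OF has_derivative_divide[OF Phi_deriv[OF cu] has_derivative_const]])
         (use C in auto)
    fix z assume "z \<in> U" then show "Phi u a b r z / C = u z" using urep by simp
  qed
  have u'eq: "u' y = (\<lambda>h. Phi1 u a b r y h / C)" if y: "y \<in> U" for y
    unfolding u'_def using frechet_derivative_at[OF d1[OF y]] by simp
  have d2: "((\<lambda>z. u' z v) has_derivative (\<lambda>l. Phi2 u a b r y v l / C)) (at y)" if y: "y \<in> U" for y v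
  proof (rule has_derivative_transform_within_open[OF _ U(1) y])
    show "((\<lambda>z. Phi1 u a b r z v / C) has_derivative (\<lambda>l. Phi2 u a b r y v l / C)) (at y)"
      by (rule has_derivative_eq_rhs[OF has_derivative_divide[OF Phi1_deriv[OF cu] has_derivative_const]])
         (use C in auto)
    fix z assume "z \<in> U" then show "Phi1 u a b r z v / C = u' z v" using u'eq by simp
  qed
  have u''eq: "u'' y v = (\<lambda>l. Phi2 u a b r y v l / C)" if y: "y \<in> U" for y v
    unfolding u''_def using frechet_derivative_at[OF d2[OF y]] by simp
  show ?thesis
  proof (rule that[OF U])
    fix y assume y: "y \<in> U"
    show "(u has_derivative u' y) (at y)" using d1[OF y] u'eq[OF y] by simp
  next
    fix y v assume y: "y \<in> U"
    show "((\<lambda>z. u' z v) has_derivative u'' y v) (at y)" using d2[OF y] u''eq[OF y] by simp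
  next
    fix y assume y: "y \<in> U"
    have "(\<Sum>i\<in>Basis. u'' y i i) = (\<Sum>i\<in>Basis. Phi2 u a b r y i i) / C"
      using u''eq[OF y] by (simp add: sum_divide_distrib)
    also have "\<dots> = 0" using lap y by simp
    finally show "(\<Sum>i\<in>Basis. u'' y i i) = 0" .
  next
    fix v w
    have "continuous_on U (\<lambda>y. Phi2 u a b r y v w / C)"
      by (intro continuous_intros continuous_on_subset[OF Phi2_cont[OF cu]]) (use C in auto)
    moreover have "\<And>y. y \<in> U \<Longrightarrow> Phi2 u a b r y v w / C = u'' y v w" using u''eq by simp
    ultimately show "continuous_on U (\<lambda>y. u'' y v w)" using continuous_on_cong by (metis (no_types, lifting))
  qed
qed

theorem theorem1p3:
  fixes D :: "'a::euclidean_space set" and u :: "'a \<Rightarrow> real"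
  assumes "DIM('a) \<ge> 2"
    and "open D" and "connected D" and "bounded D"
    and "continuous_on D u"
    and "(\<forall>x\<in>D. \<forall>r1 r2. 0 < r1 \<and> r1 < r2 \<and> cball x r2 \<subseteq> D \<longrightarrow>
            (\<forall>r. r1 < r \<and> r < r2 \<longrightarrow>
               integral (annulus x r1 r2) u / measure lebesgue (annulus x r1 r2)
                 = sphere_integral u x r / (omega DIM('a) * r ^ (DIM('a) - 1))))
       \<or> (\<forall>x\<in>D. \<forall>r1 r2. 0 < r1 \<and> r1 < r2 \<and> cball x r2 \<subseteq> D \<longrightarrow>
               integral (annulus x r1 r2) u / measure lebesgue (annulus x r1 r2)
                 = sphere_integral u x r1 / (omega DIM('a) * r1 ^ (DIM('a) - 1)))
       \<or> (\<forall>x\<in>D. \<forall>r1 r2. 0 < r1 \<and> r1 < r2 \<and> cball x r2 \<subseteq> D \<longrightarrow>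
               integral (annulus x r1 r2) u / measure lebesgue (annulus x r1 r2)
                 = sphere_integral u x r2 / (omega DIM('a) * r2 ^ (DIM('a) - 1)))"
  shows "harmonic_on D u"
proof -
  note hyp = assms(6)
  have mvpD: "integral (ball x r) u = u x * measure lebesgue (ball x r)"
    if x: "x \<in> D" and r: "0 < r" and sub: "cball x r \<subseteq> D" for x r
  proof -
    define I where "I s = integral (ball x s) u" for s
    define V where "V s = measure lebesgue (ball x s)" for s
    define g where "g \<rho> = sphere_integral u x \<rho> / (omega DIM('a) * \<rho> ^ (DIM('a) - 1))" for \<rho>
    have cx: "continuous_on (cball x r) u" using continuous_on_subset[OF assms(5) sub] .
    have conv: "I b - I a = q * (V b - V a)"
      if ab: "0 < a" "a < b" "b \<le> r" and eq: "integral (annulus x a b) u / measure lebesgue (annulus x a b) = q" for a b q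
    proof -
      have lt: "V a < V b" using vol_mono[of a b x] ab by (simp add: V_def)
      have "integral (annulus x a b) u = I b - I a" "measure lebesgue (annulus x a b) = V b - V a"
        using annulus_facts[OF cx ab] by (simp_all add: I_def V_def)
      then have "(I b - I a) / (V b - V a) = q" using eq by simp
      then show ?thesis using lt by (simp add: field_simps)
    qed
    have sb: "cball x b \<subseteq> D" if "b \<le> r" for b using subset_cball[OF that] sub by blast
    have H: "(\<forall>a b \<rho>. 0 < a \<and> a < \<rho> \<and> \<rho> < b \<and> b \<le> r \<longrightarrow> I b - I a = g \<rho> * (V b - V a))
        \<or> (\<forall>a b. 0 < a \<and> a < b \<and> b \<le> r \<longrightarrow> I b - I a = g a * (V b - V a))
        \<or> (\<forall>a b. 0 < a \<and> a < b \<and> b \<le> r \<longrightarrow> I b - I a = g b * (V b - V a))"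
      using hyp
      apply (elim disjE)
      subgoal premises h
        apply (rule disjI1)
        apply (intro allI impI)
        apply (rule conv)
        using h[rule_format, OF x] sb unfolding g_def by auto
      subgoal premises h
        apply (rule disjI2, rule disjI1)
        apply (intro allI impI)
        apply (rule conv)
        using h[rule_format, OF x] sb unfolding g_def by auto
      subgoal premises h
        apply (rule disjI2, rule disjI2)
        apply (intro allI impI)
        apply (rule conv)
        using h[rule_format, OF x] sb unfolding g_def by auto
      done
    have Vm: "V a < V b" if "0 < a" "a < b" for a b using vol_mono[of a b x] that by (simp add: V_def)
    obtain c where c: "\<forall>a b. 0 < a \<longrightarrow> a < b \<longrightarrow> b \<le> r \<longrightarrow> I b - I a = c * (V b - V a)"
      using reduce_cases[OF Vm r H] by blast
    show ?thesis
      by (rule ball_mvp_core[OF cx r, of c]) (use c in \<open>auto simp: I_def V_def\<close>)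
  qed
  define u' where "u' = (\<lambda>x. frechet_derivative u (at x))"
  define u'' where "u'' = (\<lambda>x v. frechet_derivative (\<lambda>y. u' y v) (at x))"
  note L = loc_lemma[OF assms(2) assms(5) _ mvpD u'_def u''_def]
  show ?thesis
    unfolding harmonic_on_def
  proof (intro exI conjI ballI allI)
    fix x assume x: "x \<in> D"
    show "(u has_derivative u' x) (at x)" by (rule L[OF x]) auto
    fix v show "((\<lambda>y. u' y v) has_derivative u'' x v) (at x)" by (rule L[OF x]) auto
  next
    fix x assume x: "x \<in> D"
    show "(\<Sum>b\<in>Basis. u'' x b b) = 0" by (rule L[OF x]) auto
  next
    fix v w
    show "continuous_on D (\<lambda>x. u'' x v w)"
    proof (rule continuous_at_imp_continuous_on, rule ballI)
      fix x assume x: "x \<in> D"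
      show "isCont (\<lambda>y. u'' y v w) x"
      proof (rule L[OF x])
        fix U assume "open U" "x \<in> U" "\<And>v w. continuous_on U (\<lambda>y. u'' y v w)"
        then show "isCont (\<lambda>y. u'' y v w) x" using continuous_on_eq_continuous_at by blast
      qed
    qed
  qed
qed

end
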